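(* Let $S$ be a reflective numerical semigroup with $\mathrm{g}(S)=g\ge1$ and $\mathrm{m}(S)=a$, and let $r\in\{1,\dots,a-1\}$ satisfy $g\equiv r\pmod a$. Then the minimal generating set $A$ of $S$ is \[ A=\begin{cases} \{a\}\cup\big(\{g+1,\dots,g+(a-1)\}\setminus\{g+(a-r)\}\big) & \text{if } g\not\equiv -1\pmod a,\\ \{a,\ 2g+1\}\cup\{g+2,\dots,g+(a-1)\} & \text{if } g\equiv -1\pmod a.\end{cases}\] Consequently the embedding dimension of $S$ is $a-1$ if $g\not\equiv-1\pmod a$ and $a$ if $g\equiv -1\pmod a$.
   Context: A numerical semigroup is a submonoid $S$ of $(\mathbb{N}_0,+)$ with finite complement. Its set of gaps is $\mathrm{H}(S)=\mathbb{N}_0\setminus S$, its genus is $\mathrm{g}(S)=\#\mathrm{H}(S)$, and its multiplicity $\mathrm{m}(S)$ is the smallest positive element of $S$. For $A\subseteq\mathbb{N}_0$, $\langle A\rangle$ denotes the set of finite $\mathbb{N}_0$-linear combinations of elements of $A$. The minimal generating set of $S$ is the unique inclusion-minimal $A$ with $S=\langle A\rangle$ (equivalently, a generating set in which no element is an $\mathbb{N}_0$-linear combination of the other elements); its cardinality is the embedding dimension of $S$. A numerical semigroup $S$ of genus $g\ge1$ is called reflective if for every $z\in\{0,1,\dots,g-1\}$ exactly one of $z$ and $z+g$ belongs to $S$. *)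

theory Defs
  imports Main
begin

inductive_set gen :: "nat set \<Rightarrow> nat set" for A :: "nat set" where
  gen_zero: "0 \<in> gen A"
| gen_add: "a \<in> A \<Longrightarrow> x \<in> gen A \<Longrightarrow> a + x \<in> gen A"

definition numerical_semigroup :: "nat set \<Rightarrow> bool" where
  "numerical_semigroup S \<longleftrightarrow> 0 \<in> S \<and> (\<forall>x\<in>S. \<forall>y\<in>S. x + y \<in> S) \<and> finite (UNIV - S)"

definition gaps :: "nat set \<Rightarrow> nat set" where
  "gaps S = UNIV - S"

definition genus :: "nat set \<Rightarrow> nat" where
  "genus S = card (gaps S)"

definition multiplicity :: "nat set \<Rightarrow> nat" where
  "multiplicity S = (LEAST x. x \<in> S \<and> 0 < x)"

definition is_minimal_generating_set :: "nat set \<Rightarrow> nat set \<Rightarrow> bool" where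
  "is_minimal_generating_set S A \<longleftrightarrow> S = gen A \<and> (\<forall>B. B \<subset> A \<longrightarrow> gen B \<noteq> S)"

definition minimal_generating_set :: "nat set \<Rightarrow> nat set" where
  "minimal_generating_set S = (THE A. is_minimal_generating_set S A)"

definition embedding_dimension :: "nat set \<Rightarrow> nat" where
  "embedding_dimension S = card (minimal_generating_set S)"

definition reflective :: "nat set \<Rightarrow> bool" where
  "reflective S \<longleftrightarrow> genus S \<ge> 1 \<and>
     (\<forall>z < genus S. (z \<in> S) \<noteq> (z + genus S \<in> S))"

end

theory Submission
  imports Defs
begin


lemma gen_closed: assumes "x \<in> gen A" "y \<in> gen A" shows "x+y \<in> gen A"
  using assms(1) by induction (auto simp: add.assoc intro: gen.intros assms(2))

lemma gen_subset: "A \<subseteq> gen A"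
proof
  fix a assume "a \<in> A" then have "a + 0 \<in> gen A" by (intro gen.intros)
  then show "a \<in> gen A" by simp
qed

lemma gen_in: assumes "0 \<in> S" "\<forall>x\<in>S. \<forall>y\<in>S. x+y \<in> S" "A \<subseteq> S" shows "gen A \<subseteq> S"
proof
  fix x assume "x \<in> gen A" then show "x \<in> S" by induction (use assms in auto)
qed

definition atoms :: "nat set \<Rightarrow> nat set" where
  "atoms S = {n \<in> S. 0 < n \<and> \<not>(\<exists>s\<in>S. \<exists>t\<in>S. 0<s \<and> 0<t \<and> n = s+t)}"

lemma gen_atoms: assumes "0 \<in> S" "\<forall>x\<in>S. \<forall>y\<in>S. x+y \<in> S" shows "gen (atoms S) = S"
proof
  show "gen (atoms S) \<subseteq> S" by (rule gen_in[OF assms]) (auto simp: atoms_def)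
  have "\<forall>n. n \<in> S \<longrightarrow> n \<in> gen (atoms S)"
  proof (intro allI)
    fix n show "n \<in> S \<longrightarrow> n \<in> gen (atoms S)"
    proof (induction n rule: less_induct)
      case (less n)
      show ?case
      proof
        assume n: "n \<in> S"
        show "n \<in> gen (atoms S)"
        proof (cases "n \<in> atoms S")
          case True then show ?thesis using gen_subset by blast
        next
          case False
          show ?thesis
          proof (cases "n = 0")
            case True then show ?thesis by (simp add: gen.intros)
          next
            case nz: False
            with False n obtain s t where "s \<in> S" "t \<in> S" "0<s" "0<t" "n = s+t"
              unfolding atoms_def by auto
            then show ?thesis using less gen_closed by (metis add_less_cancel_left add_less_cancel_right add_0 add_0_right)
          qed
        qed
      qed
    qed
  qed
  then show "S \<subseteq> gen (atoms S)" by blast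
qed

lemma atoms_sub: assumes "gen A = S" shows "atoms S \<subseteq> A"
proof -
  have "x \<in> gen A \<Longrightarrow> x \<in> atoms (gen A) \<Longrightarrow> x \<in> A" for x
  proof (induction rule: gen.induct)
    case gen_zero then show ?case by (simp add: atoms_def)
  next
    case (gen_add a x)
    show ?case
    proof (cases "x = 0")
      case True then show ?thesis using gen_add by simp
    next
      case xn: False
      show ?thesis
      proof (cases "a = 0")
        case True then show ?thesis using gen_add by simp
      next
        case False
        have "a \<in> gen A" using gen_add gen_subset by blast
        then show ?thesis using gen_add xn False unfolding atoms_def by blast
      qed
    qed
  qed
  note * = this
  show ?thesis
  proof
    fix x assume x: "x \<in> atoms S"
    then have "x \<in> gen A" using assms unfolding atoms_def by blast
    then show "x \<in> A" using * x assms by blast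
  qed
qed

lemma mgs: assumes "0 \<in> S" "\<forall>x\<in>S. \<forall>y\<in>S. x+y \<in> S"
  shows "minimal_generating_set S = atoms S"
proof -
  have ism: "is_minimal_generating_set S (atoms S)"
    unfolding is_minimal_generating_set_def
    using gen_atoms[OF assms] atoms_sub by blast
  have "A = atoms S" if "is_minimal_generating_set S A" for A
  proof -
    have g: "gen A = S" and m: "\<forall>B. B \<subset> A \<longrightarrow> gen B \<noteq> S"
      using that unfolding is_minimal_generating_set_def by auto
    have "atoms S \<subseteq> A" using atoms_sub[OF g] .
    then show ?thesis using m gen_atoms[OF assms] by blast
  qed
  then show ?thesis unfolding minimal_generating_set_def using ism by (rule the_equality[rotated])
qed



lemma atoms_char:
  fixes S :: "nat set" and g a :: nat
  assumes a2: "a \<ge> 2" and g1: "g \<ge> 1" and ndvd: "\<not> a dvd g" and ag: "a \<le> g+1"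
    and ch: "\<And>n. n \<in> S \<longleftrightarrow> (n<g \<and> a dvd n) \<or> (g<n \<and> n<2*g \<and> \<not> a dvd (n-g)) \<or> 2*g \<le> n"
  shows "atoms S = {a} \<union> ({g+1..g+a-1} - {g+a-g mod a}) \<union> (if a dvd (g+1) then {2*g+1} else {})"
proof -
  define q r where "q = g div a" and "r = g mod a"
  have gq: "g = a*q + r" unfolding q_def r_def by simp
  have r1: "r \<ge> 1" using ndvd unfolding r_def by (metis dvd_eq_mod_eq_0 less_one not_le)
  have ra: "r < a" unfolding r_def using a2 by simp
  have m: "g + a - g mod a = a*(q+1)" using gq r_def ra by (simp add: algebra_simps)
  have aS: "a \<in> S"
  proof (cases "a < g")
    case True then show ?thesis using ch by auto
  next
    case False
    then have "a = g \<or> a = g+1" using ag by auto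
    moreover have "a \<noteq> g" using ndvd by auto
    ultimately have "a = g+1" by blast
    moreover have "\<not> a dvd 1" using a2 by auto
    ultimately show ?thesis using ch[of a] by auto
  qed
  have mins: "a \<le> x" if "x \<in> S" "0 < x" for x
  proof -
    have "(x<g \<and> a dvd x) \<or> g < x" using ch[of x] that by auto
    then show ?thesis using ag that by (auto dest: dvd_imp_le)
  qed
  have gS: "g \<notin> S" using ch[of g] ndvd g1 by auto
  have low: "a dvd x" if "x \<in> S" "x < g" for x using ch[of x] that by auto
  have mid: "x \<in> S \<longleftrightarrow> \<not> a dvd (x-g)" if "g < x" "x < 2*g" for x using ch[of x] that by auto
  have big: "x \<in> S" if "2*g \<le> x" for x using ch[of x] that by auto
  have lowI: "x \<in> S" if "a dvd x" "x < g" for x using ch[of x] that by auto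
  have dec: "n \<in> atoms S \<longleftrightarrow> n\<in>S \<and> 0<n \<and> \<not>(\<exists>s\<in>S. \<exists>t\<in>S. 0<s \<and> 0<t \<and> n=s+t)" for n
    unfolding atoms_def by blast
  show ?thesis
  proof (rule set_eqI)
    fix n
    show "n \<in> atoms S \<longleftrightarrow> n \<in> {a} \<union> ({g+1..g+a-1} - {g+a-g mod a}) \<union> (if a dvd (g+1) then {2*g+1} else {})"
    proof
      assume "n \<in> atoms S"
      then have nS: "n \<in> S" and n0: "0 < n" and nd: "\<And>s. s \<in> S \<Longrightarrow> 0 < s \<Longrightarrow> s < n \<Longrightarrow> n - s \<in> S \<Longrightarrow> False"
        unfolding dec by (auto, metis le_add_diff_inverse less_imp_le zero_less_diff)
      show "n \<in> {a} \<union> ({g+1..g+a-1} - {g+a-g mod a}) \<union> (if a dvd (g+1) then {2*g+1} else {})"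
      proof (cases "n < g")
        case True
        then obtain k where k: "n = a*k" using low nS by blast
        have "n = a"
        proof (rule ccontr)
          assume "n \<noteq> a"
          then have "k \<ge> 2" using k n0 by (cases k) auto
          then have "n - a = a*(k-1)" "a < n" using k a2 by (auto simp: algebra_simps diff_mult_distrib2)
          then have "n - a \<in> S" using lowI True by auto
          then show False using nd[OF aS] a2 \<open>a < n\<close> by auto
        qed
        then show ?thesis by simp
      next
        case False
        then have gn: "g < n" using gS nS by (cases "n = g") auto
        show ?thesis
        proof (cases "n \<le> g+a-1")
          case True
          show ?thesis
          proof (cases "n = g+a-g mod a")
            case False then show ?thesis using True gn by auto
          next
            case eq: True
            show ?thesis
            proof (cases "q = 0")
              case True then show ?thesis using eq m by simp
            next
              case False
              have "n - a = a*q" using eq m by (simp add: algebra_simps)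
              moreover have "a*q < g" using gq r1 by simp
              ultimately have "n - a \<in> S" using lowI by auto
              moreover have "a < n" using eq m False a2 by (simp add: algebra_simps)
              ultimately show ?thesis using nd[OF aS] a2 by auto
            qed
          qed
        next
          case False
          then have nga: "n \<ge> g + a" by simp
          have "n - a \<notin> S"
          proof
            assume "n - a \<in> S"
            then show False using nd[OF aS] a2 nga g1 by auto
          qed
          then have "n - a < 2*g" and "n - a = g \<or> a dvd (n-a-g)" using ch[of "n-a"] nga by auto
          then have d1: "a dvd (n-a-g)" by auto
          have "n - g = (n-a-g) + a" using nga by simp
          then have d2: "a dvd (n-g)" using d1 by simp
          have n2g: "2*g \<le> n" using mid[of n] gn nS d2 by (cases "n < 2*g") auto
          define j where "j = n - 2*g"
          have ja: "j < a" using \<open>n - a < 2*g\<close> j_def nga n2g by linarith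
          have "n - g = j + g" using j_def n2g by simp
          then have "a dvd (j + r) + a*q" using d2 gq by (simp add: algebra_simps)
          then have "a dvd (j + r)" by (simp add: dvd_add_left_iff)
          then obtain c where c: "j + r = a*c" by blast
          have "c = 1"
          proof -
            have "0 < a*c" unfolding c[symmetric] using r1 by simp
            then have "c \<ge> 1" by simp
            moreover have "a*c < a*2" unfolding c[symmetric] using ja ra by simp
            then have "c < 2" by (metis mult_less_cancel1)
            ultimately show ?thesis by simp
          qed
          then have jr: "j + r = a" using c by simp
          show ?thesis
          proof (cases "r = a - 1")
            case True
            then have "j = 1" using jr a2 by simp
            then have "n = 2*g+1" using j_def n2g by simp
            moreover have "g+1 = a*(q+1)" using gq True a2 by simp
            then have "a dvd (g+1)" by simp
            ultimately show ?thesis by simp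
          next
            case False
            have s1: "g + 1 \<in> S"
            proof (cases "g+1 < 2*g")
              case True then show ?thesis using mid[of "g+1"] a2 by (auto dest: dvd_imp_le)
            next
              case False then show ?thesis using big by simp
            qed
            have t1: "n - (g+1) \<in> S"
            proof -
              have e: "n - (g+1) = g + (a - r - 1)" using jr j_def n2g ra by arith
              have p: "0 < a - r - 1" "a - r - 1 < a" using False ra by auto
              show ?thesis
              proof (cases "n - (g+1) < 2*g")
                case True then show ?thesis using mid[of "n-(g+1)"] e p by (auto dest: dvd_imp_le)
              next
                case False then show ?thesis using big by simp
              qed
            qed
            have "g + 1 < n" using n2g g1 j_def jr r1 ra False by simp
            then show ?thesis using nd[OF s1] t1 by simp
          qed
        qed
      qed
    next
      assume H: "n \<in> {a} \<union> ({g+1..g+a-1} - {g+a-g mod a}) \<union> (if a dvd (g+1) then {2*g+1} else {})"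
      have sp: "\<not>(\<exists>s\<in>S. \<exists>t\<in>S. 0<s \<and> 0<t \<and> n=s+t)" if
        "\<And>s t. s \<in> S \<Longrightarrow> t \<in> S \<Longrightarrow> 0<s \<Longrightarrow> 0<t \<Longrightarrow> n=s+t \<Longrightarrow> s \<le> t \<Longrightarrow> False"
        using that by (metis add.commute nat_le_linear)
      consider "n = a" | "n \<in> {g+1..g+a-1}" "n \<noteq> g+a-g mod a" | "a dvd (g+1)" "n = 2*g+1"
        using H by (auto split: if_splits)
      then show "n \<in> atoms S"
      proof cases
        case 1
        have "False" if "s \<in> S" "t \<in> S" "0<s" "0<t" "a=s+t" for s t
        proof -
          have "a \<le> s" using mins that(1,3) .
          moreover have "a \<le> t" using mins that(2,4) .
          ultimately show False using that(3,4,5) by linarith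
        qed
        then show ?thesis unfolding dec using aS a2 1 by auto
      next
        case 2
        have nS: "n \<in> S"
        proof (cases "n < 2*g")
          case True
          have "\<not> a dvd (n-g)" using 2 by (auto dest: dvd_imp_le)
          then show ?thesis using mid[of n] True 2 by auto
        next
          case False then show ?thesis using big by simp
        qed
        have nd: "\<not> a dvd n"
        proof
          assume "a dvd n"
          then obtain k where k: "n = a*k" by blast
          have gn: "g < n" "n < g + a" using 2 a2 by auto
          have "a*q < a*k" using k gn gq by linarith
          then have "q < k" by (metis mult_less_cancel1)
          moreover have "a*k < a*(q+2)" using k gn gq ra by (simp add: algebra_simps)
          then have "k < q+2" by (metis mult_less_cancel1)
          ultimately have "k = q+1" by simp
          then show False using k m 2 by simp
        qed
        have "False" if "s \<in> S" "t \<in> S" "0<s" "0<t" "n=s+t" for s t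
        proof -
          have "a \<le> s" "a \<le> t" using mins that by auto
          have "s \<noteq> g" "t \<noteq> g" using that gS by auto
          then have "s < g" "t < g" using 2 that \<open>a \<le> s\<close> \<open>a \<le> t\<close> by auto
          then have "a dvd s" "a dvd t" using low that by auto
          then show False using nd that by auto
        qed
        then show ?thesis unfolding dec using nS 2 by auto
      next
        case 3
        have nS: "n \<in> S" using 3 big by simp
        have fs: "False" if "s \<in> S" "t \<in> S" "0<s" "0<t" "n=s+t" "s \<le> t" for s t
        proof -
          have "s \<le> g" using that 3 by simp
          then have sg: "s < g" using that gS by (cases "s = g") auto
          then have ds: "a dvd s" using low that by auto
          have "a \<le> s" using mins that by auto
          then have "t < 2*g" using that 3 a2 by simp
          moreover have "g < t" using that 3 sg by simp
          moreover have "a dvd (t - g)"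
          proof -
            have "t - g = (g+1) - s" using that 3 sg by simp
            then show ?thesis using ds 3 dvd_diff_nat by simp
          qed
          ultimately show False using mid that by auto
        qed
        have "\<not>(\<exists>s\<in>S. \<exists>t\<in>S. 0<s \<and> 0<t \<and> n=s+t)" by (rule sp, rule fs)
        then show ?thesis unfolding dec using nS 3 by auto
      qed
    qed
  qed
qed



theorem mainTheorem4:
  fixes S :: "nat set" and g a r :: nat
  assumes "numerical_semigroup S"
    and "reflective S"
    and "genus S = g" and "g \<ge> 1"
    and "multiplicity S = a"
    and "r \<in> {1..a-1}" and "g mod a = r"
  shows "minimal_generating_set S =
           (if (g + 1) mod a \<noteq> 0
            then {a} \<union> ({g+1..g+(a-1)} - {g + (a - r)})
            else {a, 2*g+1} \<union> {g+2..g+(a-1)})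
      \<and> embedding_dimension S = (if (g + 1) mod a \<noteq> 0 then a - 1 else a)"
proof -
  have S0: "0 \<in> S" and Sc: "\<forall>x\<in>S. \<forall>y\<in>S. x+y \<in> S" and Sf: "finite (UNIV - S)"
    using assms(1) unfolding numerical_semigroup_def by auto
  have R: "\<And>z. z < g \<Longrightarrow> (z \<in> S) \<noteq> (z + g \<in> S)"
    using assms(2,3) unfolding reflective_def by auto
  have r1: "1 \<le> r" and ra: "r < a" and a2: "a \<ge> 2" using assms(6) by auto
  have cardG: "card (UNIV - S) = g" using assms(3) unfolding genus_def gaps_def by simp
  define f where "f z = (if z \<in> S then z + g else z)" for z
  have bij: "bij_betw f {..<g} ((UNIV - S) \<inter> {..<2*g})"
    unfolding bij_betw_def
  proof
    show "inj_on f {..<g}"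
      unfolding inj_on_def f_def by auto
    show "f ` {..<g} = (UNIV - S) \<inter> {..<2*g}"
    proof
      show "f ` {..<g} \<subseteq> (UNIV - S) \<inter> {..<2*g}"
        unfolding f_def using R by auto
      show "(UNIV - S) \<inter> {..<2*g} \<subseteq> f ` {..<g}"
      proof
        fix y assume y: "y \<in> (UNIV - S) \<inter> {..<2*g}"
        show "y \<in> f ` {..<g}"
        proof (cases "y < g")
          case True then show ?thesis using y unfolding f_def by (auto intro!: image_eqI[of y])
        next
          case False
          then have "y - g < g" "y = (y - g) + g" using y by auto
          then have "y - g \<in> S" using R[of "y-g"] y by auto
          then have "f (y - g) = y" unfolding f_def using \<open>y = (y - g) + g\<close> by simp
          then show ?thesis using \<open>y - g < g\<close> by (auto intro!: image_eqI[of y f "y-g"])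
        qed
      qed
    qed
  qed
  have "card ((UNIV - S) \<inter> {..<2*g}) = g" using bij_betw_same_card[OF bij] by simp
  then have GI: "(UNIV - S) \<inter> {..<2*g} = UNIV - S"
    using card_subset_eq[OF Sf, of "(UNIV - S) \<inter> {..<2*g}"] cardG by auto
  have tail: "n \<in> S" if "2*g \<le> n" for n
  proof (rule ccontr)
    assume "n \<notin> S"
    then have "n \<in> (UNIV - S) \<inter> {..<2*g}" using GI by blast
    then show False using that by simp
  qed
  have aeq: "a = (LEAST x. x \<in> S \<and> 0 < x)" using assms(5) unfolding multiplicity_def by simp
  have ex: "2*g \<in> S \<and> 0 < 2*g" using tail assms(4) by auto
  have aS: "a \<in> S" and a0: "0 < a" using LeastI[of "\<lambda>x. x \<in> S \<and> 0 < x", OF ex] aeq by auto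
  have mins: "\<And>x. x \<in> S \<Longrightarrow> 0 < x \<Longrightarrow> a \<le> x" using aeq by (simp add: Least_le)
  have gS: "g \<notin> S" using R[of 0] S0 assms(4) by auto
  have low: "\<forall>x. x < g \<longrightarrow> (x \<in> S \<longleftrightarrow> a dvd x)"
  proof (intro allI)
    fix x show "x < g \<longrightarrow> (x \<in> S \<longleftrightarrow> a dvd x)"
    proof (induction x rule: less_induct)
      case (less x)
      show ?case
      proof
        assume xg: "x < g"
        show "x \<in> S \<longleftrightarrow> a dvd x"
        proof (cases "x < a")
          case True
          have "x \<in> S \<longleftrightarrow> x = 0" using mins True S0 by fastforce
          moreover have "a dvd x \<longleftrightarrow> x = 0" using True by (auto dest: dvd_imp_le)
          ultimately show ?thesis by simp
        next
          case False
          then have xa: "x = (x - a) + a" by simp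
          have xl: "x - a < x" using False a0 by simp
          have ih: "x - a \<in> S \<longleftrightarrow> a dvd (x - a)" using less.IH[OF xl] xg by simp
          have d: "a dvd x \<longleftrightarrow> a dvd (x - a)" using False by (simp add: dvd_diff_nat dvd_minus_self)
          have "x \<in> S \<longleftrightarrow> x - a \<in> S"
          proof
            assume xS: "x \<in> S"
            show "x - a \<in> S"
            proof (rule ccontr)
              assume "x - a \<notin> S"
              then have "(x - a) + g \<in> S" using R[of "x-a"] xg by auto
              then have "a + ((x - a) + g) \<in> S" using Sc aS by blast
              then have "x + g \<in> S" using xa by (metis add.assoc add.commute)
              then show False using R[of x] xg xS by auto
            qed
          next
            assume "x - a \<in> S"
            then have "(x - a) + a \<in> S" using Sc aS by blast
            then show "x \<in> S" using xa by simp
          qed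
          then show ?thesis using ih d by simp
        qed
      qed
    qed
  qed
  have ndvd: "\<not> a dvd g" using assms(7) r1 by (simp add: dvd_eq_mod_eq_0)
  have ch: "n \<in> S \<longleftrightarrow> (n<g \<and> a dvd n) \<or> (g<n \<and> n<2*g \<and> \<not> a dvd (n-g)) \<or> 2*g \<le> n" for n
  proof -
    consider "n < g" | "n = g" | "g < n" "n < 2*g" | "2*g \<le> n" by linarith
    then show ?thesis
    proof cases
      case 1 then show ?thesis using low by auto
    next
      case 2 then show ?thesis using gS ndvd assms(4) by auto
    next
      case 3
      then have "n - g < g" "n = (n - g) + g" by auto
      then have "(n - g \<in> S) \<noteq> (n \<in> S)" using R[of "n-g"] by auto
      then show ?thesis using low \<open>n - g < g\<close> 3 by auto
    qed (use tail in auto)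
  qed
  have "g + 1 \<in> S"
  proof (cases "g + 1 < 2*g")
    case True
    have "\<not> a dvd 1" using a2 by auto
    then show ?thesis using ch[of "g+1"] True by auto
  next
    case False then show ?thesis using tail by simp
  qed
  then have ag: "a \<le> g + 1" using mins by simp
  have AT: "atoms S = {a} \<union> ({g+1..g+a-1} - {g+a-g mod a}) \<union> (if a dvd (g+1) then {2*g+1} else {})"
    by (rule atoms_char[OF a2 assms(4) ndvd ag ch])
  have MG: "minimal_generating_set S = atoms S" by (rule mgs[OF S0 Sc])
  have modeq: "(g + 1) mod a = 0 \<longleftrightarrow> r + 1 = a"
    using mod_Suc[of g a] assms(7) a0 by auto
  have e1: "g + a - g mod a = g + (a - r)" using assms(7) ra by simp
  have e2: "g + a - 1 = g + (a - 1)" using a0 by simp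
  show ?thesis
  proof (cases "(g + 1) mod a = 0")
    case False
    then have nd: "\<not> a dvd (g+1)" by (simp add: dvd_eq_mod_eq_0)
    have set: "minimal_generating_set S = {a} \<union> ({g+1..g+(a-1)} - {g + (a - r)})"
      unfolding MG AT[unfolded e1 e2] if_not_P[OF nd] by simp
    have anot: "a \<notin> {g+1..g+(a-1)} - {g + (a - r)}"
    proof
      assume "a \<in> {g+1..g+(a-1)} - {g + (a - r)}"
      then have "a = g + 1" "a \<noteq> g + (a - r)" using ag by auto
      moreover have "r = g" using \<open>a = g+1\<close> assms(7) by simp
      ultimately show False by simp
    qed
    have "g + (a - r) \<in> {g+1..g+(a-1)}" using r1 ra by auto
    then have "card ({g+1..g+(a-1)} - {g + (a - r)}) = a - 2" by (simp add: card_Diff_singleton)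
    then have "card ({a} \<union> ({g+1..g+(a-1)} - {g + (a - r)})) = a - 1" using anot a2 by simp
    then show ?thesis using set False unfolding embedding_dimension_def by simp
  next
    case True
    then have ra1: "r + 1 = a" using modeq by simp
    then have dv: "a dvd (g+1)" using True by (simp add: dvd_eq_mod_eq_0)
    have e3: "g + (a - r) = g + 1" using ra1 by simp
    have e4: "{g+1..g+(a-1)} - {g+1} = {g+2..g+(a-1)}" by auto
    have "minimal_generating_set S = {a} \<union> ({g+1..g+(a-1)} - {g + (a - r)}) \<union> {2*g+1}"
      unfolding MG AT[unfolded e1 e2] if_P[OF dv] ..
    also have "\<dots> = {a, 2*g+1} \<union> {g+2..g+(a-1)}" unfolding e3 e4 by blast
    finally have set: "minimal_generating_set S = {a, 2*g+1} \<union> {g+2..g+(a-1)}" .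
    have "card {g+2..g+(a-1)} = a - 2" by simp
    moreover have "a \<notin> {g+2..g+(a-1)}" "2*g+1 \<notin> {g+2..g+(a-1)}" "a \<noteq> 2*g+1"
      using ag a2 by auto
    ultimately have "card ({a, 2*g+1} \<union> {g+2..g+(a-1)}) = a" using a2 by simp
    then show ?thesis using set True unfolding embedding_dimension_def by simp
  qed
qed

end
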